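(* Let $G$ be a finite simple undirected graph and $r<s$ positive integers. Run the procedure set-k on $(G,r,s)$ and let $R_1,R_2,\dots$ be the $K_r$s of $G$ in the order in which they are processed. Then the sequence $\kappa(R_1),\kappa(R_2),\dots$ is monotonically non-decreasing.
   Context: A $K_r$ is an $r$-clique of $G$. Procedure set-k$(G,r,s)$: enumerate all $K_r$s and $K_s$s of $G$; for every $K_r$ $R$ initialize $\delta(R)$ to the number of $K_s$s containing $R$; mark every $K_r$ unprocessed. Then repeat until all $K_r$s are processed: pick an unprocessed $K_r$ $R$ with minimum current $\delta(R)$ (ties broken arbitrarily); set $\kappa(R)=\delta(R)$; for each $K_s$ $S$ containing $R$: if some $K_r$ contained in $S$ is already marked processed, skip $S$; otherwise, for each $K_r$ $R'\subset S$ with $R'\neq R$, if $\delta(R')>\delta(R)$ then decrease $\delta(R')$ by $1$. Finally mark $R$ processed. The output is the array $\kappa(\cdot)$. *)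

theory Defs
  imports Main
begin

definition simple_graph :: "'a set \<Rightarrow> ('a \<Rightarrow> 'a \<Rightarrow> bool) \<Rightarrow> bool" where
  "simple_graph V E \<longleftrightarrow> finite V \<and> (\<forall>x y. E x y \<longrightarrow> x \<in> V \<and> y \<in> V)
     \<and> (\<forall>x y. E x y \<longrightarrow> E y x) \<and> (\<forall>x. \<not> E x x)"

definition cliques :: "'a set \<Rightarrow> ('a \<Rightarrow> 'a \<Rightarrow> bool) \<Rightarrow> nat \<Rightarrow> 'a set set" where
  "cliques V E k = {C. C \<subseteq> V \<and> card C = k \<and> (\<forall>x\<in>C. \<forall>y\<in>C. x \<noteq> y \<longrightarrow> E x y)}"

definition delta0 :: "'a set \<Rightarrow> ('a \<Rightarrow> 'a \<Rightarrow> bool) \<Rightarrow> nat \<Rightarrow> 'a set \<Rightarrow> nat" where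
  "delta0 V E s R = card {S \<in> cliques V E s. R \<subseteq> S}"

definition process_S :: "'a set \<Rightarrow> ('a \<Rightarrow> 'a \<Rightarrow> bool) \<Rightarrow> nat \<Rightarrow> 'a set set \<Rightarrow> 'a set
    \<Rightarrow> 'a set \<Rightarrow> ('a set \<Rightarrow> nat) \<Rightarrow> ('a set \<Rightarrow> nat)" where
  "process_S V E r Done R S \<delta> =
     (if \<exists>R''\<in>cliques V E r. R'' \<in> Done \<and> R'' \<subseteq> S then \<delta>
      else (\<lambda>R'. if R' \<in> cliques V E r \<and> R' \<subseteq> S \<and> R' \<noteq> R \<and> \<delta> R' > \<delta> R
                 then \<delta> R' - 1 else \<delta> R'))"

text \<open>A state consists of the list of processed K_r's in
  processing order, each paired with its value kappa, and the current delta array.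
  The choice of the minimum (ties arbitrary) and the order in which the K_s's
  containing R are visited are both nondeterministic.\<close>
inductive set_k_run :: "'a set \<Rightarrow> ('a \<Rightarrow> 'a \<Rightarrow> bool) \<Rightarrow> nat \<Rightarrow> nat
    \<Rightarrow> ('a set \<times> nat) list \<Rightarrow> ('a set \<Rightarrow> nat) \<Rightarrow> bool"
  for V E r s where
  init: "set_k_run V E r s [] (delta0 V E s)"
| step: "\<lbrakk> set_k_run V E r s P \<delta>;
          R \<in> cliques V E r; R \<notin> fst ` set P;
          \<forall>R'\<in>cliques V E r - fst ` set P. \<delta> R \<le> \<delta> R';
          distinct Ss; set Ss = {S \<in> cliques V E s. R \<subseteq> S} \<rbrakk>
        \<Longrightarrow> set_k_run V E r s (P @ [(R, \<delta> R)])
              (fold (process_S V E r (fst ` set P) R) Ss \<delta>)"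

end

theory Submission
  imports Defs
begin

lemma pS_R: "process_S V E r D R S \<delta> R = \<delta> R"
  by (simp add: process_S_def)

lemma pS_ge: "\<delta> R \<le> \<delta> R' \<Longrightarrow> \<delta> R \<le> process_S V E r D R S \<delta> R'"
  by (auto simp add: process_S_def)

lemma fold_pS:
  "\<delta> R \<le> \<delta> R' \<Longrightarrow> fold (process_S V E r D R) Ss \<delta> R = \<delta> R
    \<and> \<delta> R \<le> fold (process_S V E r D R) Ss \<delta> R'"
proof (induction Ss arbitrary: \<delta>)
  case Nil then show ?case by simp
next
  case (Cons S Ss)
  have "(process_S V E r D R S \<delta>) R \<le> (process_S V E r D R S \<delta>) R'"
    using Cons.prems pS_ge pS_R by metis
  from Cons.IH[OF this] show ?case by (simp add: pS_R)
qed

lemma inv: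
  "set_k_run V E r s P \<delta> \<Longrightarrow> sorted (map snd P) \<and>
     (\<forall>x\<in>set P. \<forall>R'\<in>cliques V E r - fst ` set P. snd x \<le> \<delta> R')"
proof (induction rule: set_k_run.induct)
  case init then show ?case by simp
next
  case (step P \<delta> R Ss)
  have A: "\<forall>x\<in>set P. snd x \<le> \<delta> R" using step by blast
  have B: "\<delta> R \<le> fold (process_S V E r (fst ` set P) R) Ss \<delta> R'"
    if "R' \<in> cliques V E r - fst ` set (P @ [(R, \<delta> R)])" for R'
    using fold_pS[of \<delta> R R'] step.hyps(4) that by auto
  show ?case
  proof
    show "sorted (map snd (P @ [(R, \<delta> R)]))"
      using step.IH A by (auto simp: sorted_append)
  next
    show "\<forall>x\<in>set (P @ [(R, \<delta> R)]). \<forall>R'\<in>cliques V E r - fst ` set (P @ [(R, \<delta> R)]).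
      snd x \<le> fold (process_S V E r (fst ` set P) R) Ss \<delta> R'"
      using A B by (auto intro: order_trans)
  qed
qed

theorem claim1:
  fixes V :: "'a set" and E :: "'a \<Rightarrow> 'a \<Rightarrow> bool" and r s :: nat
    and P :: "('a set \<times> nat) list" and \<delta> :: "'a set \<Rightarrow> nat"
  assumes "simple_graph V E" and "0 < r" and "r < s"
    and "set_k_run V E r s P \<delta>"
    and "fst ` set P = cliques V E r"
  shows "sorted (map snd P)"
  using inv[OF assms(4)] by blast

end
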